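(* Let $0<L,W<\infty$, $\tau=iW/L$, $N\in\mathbb{N}$, and $R_N\in\{A_{N-1},B_N,B_N^\vee,C_N,C_N^\vee,BC_N,D_N\}$. Define for $\mathbf{z}=(z_1,\dots,z_N)\in\mathbb{C}^N$, $z_j=x_j+iy_j$, $$Q^{A_{N-1}}(\mathbf{z})=\exp\Big(-\frac{2\pi\mathcal{N}}{LW}\sum_{j=1}^Ny_j^2\Big)\Big|\vartheta_{s(N)}\Big(\sum_{k=1}^N\frac{z_k}{L};\tau\Big)\Big|^2\big|W^{A_{N-1}}(\mathbf{z}/L;\tau)\big|^2,$$ and for the other six types $Q^{R_N}(\mathbf{z})=\exp(-\frac{2\pi\mathcal{N}}{LW}\sum_j y_j^2)|W^{R_N}(\mathbf{z}/L;\tau)|^2$. Then $Q^{R_N}$ is doubly periodic with periods $(L,iW)$ in each variable: for every $m=1,\dots,N$, $Q^{R_N}(\sigma_m(L)\mathbf{z})=Q^{R_N}(\mathbf{z})$ and $Q^{R_N}(\sigma_m(iW)\mathbf{z})=Q^{R_N}(\mathbf{z})$.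
   Context: Jacobi theta functions: for $v\in\mathbb{C}$, $\Im\tau>0$, $q_0=e^{\pi i\tau}$: $\vartheta_0(v;\tau)=\sum_{n\in\mathbb{Z}}(-1)^nq_0^{n^2}e^{2\pi inv}$, $\vartheta_1(v;\tau)=i\sum_{n}(-1)^nq_0^{(n-1/2)^2}e^{(2n-1)\pi iv}$, $\vartheta_2(v;\tau)=\sum_nq_0^{(n-1/2)^2}e^{(2n-1)\pi iv}$, $\vartheta_3(v;\tau)=\sum_nq_0^{n^2}e^{2\pi inv}$. $\mathcal{N}=\mathcal{N}^{R_N}$ is: $N$ for $A_{N-1}$; $2N-1$ for $B_N$; $2N$ for $B_N^\vee,C_N^\vee$; $2(N+1)$ for $C_N$; $2N+1$ for $BC_N$; $2(N-1)$ for $D_N$. $s(N)=0$ for $N$ even, $3$ for $N$ odd. Macdonald denominators, with $P(\boldsymbol\xi)=\prod_{1\le j<k\le N}\vartheta_1(\xi_k-\xi_j;\tau)\vartheta_1(\xi_k+\xi_j;\tau)$: $W^{A_{N-1}}(\boldsymbol\xi;\tau)=\prod_{j<k}\vartheta_1(\xi_k-\xi_j;\tau)$; $W^{B_N}=\prod_\ell\vartheta_1(\xi_\ell;\tau)P$; $W^{B_N^\vee}=\prod_\ell\vartheta_1(2\xi_\ell;2\tau)P$; $W^{C_N}=\prod_\ell\vartheta_1(2\xi_\ell;\tau)P$; $W^{C_N^\vee}=\prod_\ell\vartheta_1(\xi_\ell;\tau/2)P$; $W^{BC_N}=\prod_\ell\vartheta_1(\xi_\ell;\tau)\vartheta_0(2\xi_\ell;2\tau)P$;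 $W^{D_N}=P$. $\mathbf{z}/L=(z_1/L,\dots,z_N/L)$; $\sigma_m(w)$ replaces $z_m$ by $z_m+w$. *)

theory Defs
  imports "HOL-Analysis.Analysis"
begin

text \<open>Jacobi theta functions, as (absolutely convergent) sums over the integers.
  Here q0^(a) is written exp(pi i tau a).\<close>

definition theta0 :: "complex \<Rightarrow> complex \<Rightarrow> complex" where
  "theta0 v tau = (\<Sum>\<^sub>\<infinity>n::int. (-1) powi n *
      exp (pi * \<i> * tau * (of_int n)^2 + 2 * pi * \<i> * of_int n * v))"

definition theta1 :: "complex \<Rightarrow> complex \<Rightarrow> complex" where
  "theta1 v tau = \<i> * (\<Sum>\<^sub>\<infinity>n::int. (-1) powi n *
      exp (pi * \<i> * tau * (of_int n - 1/2)^2 + (2 * of_int n - 1) * pi * \<i> * v))"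

definition theta2 :: "complex \<Rightarrow> complex \<Rightarrow> complex" where
  "theta2 v tau = (\<Sum>\<^sub>\<infinity>n::int.
      exp (pi * \<i> * tau * (of_int n - 1/2)^2 + (2 * of_int n - 1) * pi * \<i> * v))"

definition theta3 :: "complex \<Rightarrow> complex \<Rightarrow> complex" where
  "theta3 v tau = (\<Sum>\<^sub>\<infinity>n::int.
      exp (pi * \<i> * tau * (of_int n)^2 + 2 * pi * \<i> * of_int n * v))"

definition theta_s :: "nat \<Rightarrow> complex \<Rightarrow> complex \<Rightarrow> complex" where
  "theta_s N = (if even N then theta0 else theta3)"

text \<open>The seven root-system types: A_{N-1}, B_N, B_N^vee, C_N, C_N^vee, BC_N, D_N.\<close>
datatype rtype = TA | TB | TBv | TC | TCv | TBC | TD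

definition calN :: "rtype \<Rightarrow> nat \<Rightarrow> nat" where
  "calN R N = (case R of TA \<Rightarrow> N | TB \<Rightarrow> 2*N - 1 | TBv \<Rightarrow> 2*N | TCv \<Rightarrow> 2*N
      | TC \<Rightarrow> 2*(N+1) | TBC \<Rightarrow> 2*N + 1 | TD \<Rightarrow> 2*(N-1))"

text \<open>Points of C^N are functions nat => complex, coordinates indexed by 1..N.\<close>
definition Pfac :: "nat \<Rightarrow> (nat \<Rightarrow> complex) \<Rightarrow> complex \<Rightarrow> complex" where
  "Pfac N xi tau = (\<Prod>j\<in>{1..N}. \<Prod>k\<in>{j<..N}.
      theta1 (xi k - xi j) tau * theta1 (xi k + xi j) tau)"

definition macW :: "rtype \<Rightarrow> nat \<Rightarrow> (nat \<Rightarrow> complex) \<Rightarrow> complex \<Rightarrow> complex" where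
  "macW R N xi tau = (case R of
      TA \<Rightarrow> (\<Prod>j\<in>{1..N}. \<Prod>k\<in>{j<..N}. theta1 (xi k - xi j) tau)
    | TB \<Rightarrow> (\<Prod>l\<in>{1..N}. theta1 (xi l) tau) * Pfac N xi tau
    | TBv \<Rightarrow> (\<Prod>l\<in>{1..N}. theta1 (2 * xi l) (2 * tau)) * Pfac N xi tau
    | TC \<Rightarrow> (\<Prod>l\<in>{1..N}. theta1 (2 * xi l) tau) * Pfac N xi tau
    | TCv \<Rightarrow> (\<Prod>l\<in>{1..N}. theta1 (xi l) (tau / 2)) * Pfac N xi tau
    | TBC \<Rightarrow> (\<Prod>l\<in>{1..N}. theta1 (xi l) tau * theta0 (2 * xi l) (2 * tau)) * Pfac N xi tau
    | TD \<Rightarrow> Pfac N xi tau)"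

definition Qfun :: "rtype \<Rightarrow> nat \<Rightarrow> real \<Rightarrow> real \<Rightarrow> (nat \<Rightarrow> complex) \<Rightarrow> real" where
  "Qfun R N L W z =
    (let tau = \<i> * of_real W / of_real L;
         zL = (\<lambda>j. z j / of_real L);
         g = exp (- 2 * pi * real (calN R N) / (L * W) * (\<Sum>j\<in>{1..N}. (Im (z j))^2))
     in if R = TA then
          g * (cmod (theta_s N (\<Sum>k\<in>{1..N}. z k / of_real L) tau))^2 * (cmod (macW TA N zL tau))^2
        else g * (cmod (macW R N zL tau))^2)"

definition sigma :: "nat \<Rightarrow> complex \<Rightarrow> (nat \<Rightarrow> complex) \<Rightarrow> (nat \<Rightarrow> complex)" where
  "sigma m w z = z(m := z m + w)"

end

theory Submission
  imports Defs
begin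

lemma exp_odd_pi: "exp ((2 * of_int n - 1) * pi * \<i>) = (-1 :: complex)"
proof -
  have "(2 * of_int n - 1) * pi * \<i> = (2 * complex_of_int (n-1) + 1) * pi * \<i>" by simp
  moreover have "exp ((2 * complex_of_int (n-1) + 1) * pi * \<i>) = -1"
    using exp_integer_2pi_plus1[of "of_int (n-1)"] by (simp add: mult_ac)
  ultimately show ?thesis by simp
qed

lemma exp_even_pi: "exp (2 * pi * \<i> * of_int n) = (1 :: complex)"
proof -
  have "exp ((2 * complex_of_int n * pi) * \<i>) = 1" using exp_integer_2pi[of "of_int n"] by simp
  then show ?thesis by (simp add: mult_ac)
qed

lemma theta1_plus1: "theta1 (v + 1) t = - theta1 v t"
proof -
  have "\<And>n::int. (-1) powi n * exp (pi * \<i> * t * (of_int n - 1/2)^2 + (2 * of_int n - 1) * pi * \<i> * (v+1))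
     = - ((-1) powi n * exp (pi * \<i> * t * (of_int n - 1/2)^2 + (2 * of_int n - 1) * pi * \<i> * v))"
  proof -
    fix n :: int
    have "exp (pi * \<i> * t * (of_int n - 1/2)^2 + (2 * of_int n - 1) * pi * \<i> * (v+1))
       = exp (pi * \<i> * t * (of_int n - 1/2)^2 + (2 * of_int n - 1) * pi * \<i> * v) * exp ((2 * of_int n - 1) * pi * \<i>)"
      by (rule trans[OF _ exp_add], rule arg_cong[where f=exp], simp add: algebra_simps)
    then show "?thesis n" unfolding exp_odd_pi by simp
  qed
  then show ?thesis unfolding theta1_def by (simp add: infsum_uminus)
qed

lemma theta3_plus1: "theta3 (v + 1) t = theta3 v t"
proof -
  have "\<And>n::int. exp (pi * \<i> * t * (of_int n)^2 + 2 * pi * \<i> * of_int n * (v+1))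
     = exp (pi * \<i> * t * (of_int n)^2 + 2 * pi * \<i> * of_int n * v)"
  proof -
    fix n :: int
    have "exp (pi * \<i> * t * (of_int n)^2 + 2 * pi * \<i> * of_int n * (v+1))
       = exp (pi * \<i> * t * (of_int n)^2 + 2 * pi * \<i> * of_int n * v) * exp (2 * pi * \<i> * of_int n)"
      by (rule trans[OF _ exp_add], rule arg_cong[where f=exp], simp add: algebra_simps)
    then show "?thesis n" unfolding exp_even_pi by simp
  qed
  then show ?thesis unfolding theta3_def by simp
qed

lemma theta0_plus1: "theta0 (v + 1) t = theta0 v t"
proof -
  have "\<And>n::int. (-1) powi n * exp (pi * \<i> * t * (of_int n)^2 + 2 * pi * \<i> * of_int n * (v+1))
     = (-1) powi n * exp (pi * \<i> * t * (of_int n)^2 + 2 * pi * \<i> * of_int n * v)"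
  proof -
    fix n :: int
    have "exp (pi * \<i> * t * (of_int n)^2 + 2 * pi * \<i> * of_int n * (v+1))
       = exp (pi * \<i> * t * (of_int n)^2 + 2 * pi * \<i> * of_int n * v) * exp (2 * pi * \<i> * of_int n)"
      by (rule trans[OF _ exp_add], rule arg_cong[where f=exp], simp add: algebra_simps)
    then show "?thesis n" unfolding exp_even_pi by simp
  qed
  then show ?thesis unfolding theta0_def by simp
qed

lemma bij_succ: "bij_betw (\<lambda>n::int. n + 1) UNIV UNIV"
  by (rule bij_betwI[where g="\<lambda>n. n - 1"]) auto

lemma theta1_plust: "theta1 (v + t) t = - exp (- pi * \<i> * t - 2 * pi * \<i> * v) * theta1 v t"
proof -
  define g where "g = (\<lambda>n::int. (-1) powi n * exp (pi * \<i> * t * (of_int n - 1/2)^2 + (2 * of_int n - 1) * pi * \<i> * v))"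
  have "\<And>n::int. (-1) powi n * exp (pi * \<i> * t * (of_int n - 1/2)^2 + (2 * of_int n - 1) * pi * \<i> * (v+t))
     = (- exp (- pi * \<i> * t - 2 * pi * \<i> * v)) * g (n + 1)"
  proof -
    fix n :: int
    have e: "exp (pi * \<i> * t * (of_int n - 1/2)^2 + (2 * of_int n - 1) * pi * \<i> * (v+t))
       = exp (- pi * \<i> * t - 2 * pi * \<i> * v) * exp (pi * \<i> * t * (of_int (n+1) - 1/2)^2 + (2 * of_int (n+1) - 1) * pi * \<i> * v)"
      by (rule trans[OF _ exp_add], rule arg_cong[where f=exp], simp add: algebra_simps power2_eq_square)
    have p: "(-1::complex) powi (n+1) = - ((-1) powi n)" by (simp add: power_int_add)
    show "?thesis n" unfolding g_def e p by simp
  qed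
  then have "theta1 (v + t) t = \<i> * (\<Sum>\<^sub>\<infinity>n::int. (- exp (- pi * \<i> * t - 2 * pi * \<i> * v)) * g (n + 1))"
    unfolding theta1_def by simp
  also have "\<dots> = \<i> * ((- exp (- pi * \<i> * t - 2 * pi * \<i> * v)) * (\<Sum>\<^sub>\<infinity>n::int. g (n + 1)))"
    by (simp only: infsum_cmult_right')
  also have "(\<Sum>\<^sub>\<infinity>n::int. g (n + 1)) = (\<Sum>\<^sub>\<infinity>n::int. g n)"
    using infsum_reindex_bij_betw[OF bij_succ, of g] by simp
  finally show ?thesis unfolding theta1_def g_def by (simp add: mult_ac)
qed

lemma theta3_plust: "theta3 (v + t) t = exp (- pi * \<i> * t - 2 * pi * \<i> * v) * theta3 v t"
proof -
  define g where "g = (\<lambda>n::int. exp (pi * \<i> * t * (of_int n)^2 + 2 * pi * \<i> * of_int n * v))"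
  define c where "c = exp (- pi * \<i> * t - 2 * pi * \<i> * v)"
  have "\<And>n::int. exp (pi * \<i> * t * (of_int n)^2 + 2 * pi * \<i> * of_int n * (v+t)) = c * g (n + 1)"
  proof -
    fix n :: int
    show "exp (pi * \<i> * t * (of_int n)^2 + 2 * pi * \<i> * of_int n * (v+t)) = c * g (n + 1)"
      unfolding c_def g_def
      by (rule trans[OF _ exp_add], rule arg_cong[where f=exp], simp add: algebra_simps power2_eq_square)
  qed
  then have "theta3 (v + t) t = (\<Sum>\<^sub>\<infinity>n::int. c * g (n + 1))"
    unfolding theta3_def by simp
  also have "\<dots> = c * (\<Sum>\<^sub>\<infinity>n::int. g (n + 1))"
    by (simp only: infsum_cmult_right')
  also have "(\<Sum>\<^sub>\<infinity>n::int. g (n + 1)) = (\<Sum>\<^sub>\<infinity>n::int. g n)"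
    using infsum_reindex_bij_betw[OF bij_succ, of g] by simp
  finally show ?thesis unfolding theta3_def g_def c_def by simp
qed

lemma theta0_plust: "theta0 (v + t) t = - exp (- pi * \<i> * t - 2 * pi * \<i> * v) * theta0 v t"
proof -
  define g where "g = (\<lambda>n::int. (-1) powi n * exp (pi * \<i> * t * (of_int n)^2 + 2 * pi * \<i> * of_int n * v))"
  define c where "c = - exp (- pi * \<i> * t - 2 * pi * \<i> * v)"
  have "\<And>n::int. (-1) powi n * exp (pi * \<i> * t * (of_int n)^2 + 2 * pi * \<i> * of_int n * (v+t)) = c * g (n + 1)"
  proof -
    fix n :: int
    have e: "exp (pi * \<i> * t * (of_int n)^2 + 2 * pi * \<i> * of_int n * (v+t)) =
       exp (- pi * \<i> * t - 2 * pi * \<i> * v) * exp (pi * \<i> * t * (of_int (n+1))^2 + 2 * pi * \<i> * of_int (n+1) * v)"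
      by (rule trans[OF _ exp_add], rule arg_cong[where f=exp], simp add: algebra_simps power2_eq_square)
    have p: "(-1::complex) powi (n+1) = - ((-1) powi n)" by (simp add: power_int_add)
    show "?thesis n" unfolding g_def c_def e p by simp
  qed
  then have "theta0 (v + t) t = (\<Sum>\<^sub>\<infinity>n::int. c * g (n + 1))"
    unfolding theta0_def by simp
  also have "\<dots> = c * (\<Sum>\<^sub>\<infinity>n::int. g (n + 1))"
    by (simp only: infsum_cmult_right')
  also have "(\<Sum>\<^sub>\<infinity>n::int. g (n + 1)) = (\<Sum>\<^sub>\<infinity>n::int. g n)"
    using infsum_reindex_bij_betw[OF bij_succ, of g] by simp
  finally show ?thesis unfolding theta0_def g_def c_def by simp
qed

definition hh :: "(complex \<Rightarrow> complex \<Rightarrow> complex) \<Rightarrow> complex \<Rightarrow> complex \<Rightarrow> real" where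
  "hh th t u = exp (-2*pi*(Im u)^2 / Im t) * (cmod (th u t))^2"

definition qp :: "(complex \<Rightarrow> complex \<Rightarrow> complex) \<Rightarrow> bool" where
  "qp th \<longleftrightarrow> (\<forall>v t. cmod (th (v+1) t) = cmod (th v t) \<and>
      cmod (th (v+t) t) = exp (pi * Im t + 2*pi*Im v) * cmod (th v t))"

lemma norm_qfac: "cmod (exp (- pi * \<i> * t - 2 * pi * \<i> * v)) = exp (pi * Im t + 2*pi*Im v)"
  by (simp add: norm_exp_eq_Re)

lemma qp_theta0: "qp theta0"
  unfolding qp_def
proof (intro allI conjI)
  fix v t :: complex
  show "cmod (theta0 (v + 1) t) = cmod (theta0 v t)" by (simp only: theta0_plus1 norm_minus_cancel)
  show "cmod (theta0 (v + t) t) = exp (pi * Im t + 2 * pi * Im v) * cmod (theta0 v t)"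
    by (simp only: theta0_plust norm_mult norm_minus_cancel norm_qfac)
qed

lemma qp_theta1: "qp theta1"
  unfolding qp_def
proof (intro allI conjI)
  fix v t :: complex
  show "cmod (theta1 (v + 1) t) = cmod (theta1 v t)" by (simp only: theta1_plus1 norm_minus_cancel)
  show "cmod (theta1 (v + t) t) = exp (pi * Im t + 2 * pi * Im v) * cmod (theta1 v t)"
    by (simp only: theta1_plust norm_mult norm_minus_cancel norm_qfac)
qed

lemma qp_theta3: "qp theta3"
  unfolding qp_def
proof (intro allI conjI)
  fix v t :: complex
  show "cmod (theta3 (v + 1) t) = cmod (theta3 v t)" by (simp only: theta3_plus1 norm_minus_cancel)
  show "cmod (theta3 (v + t) t) = exp (pi * Im t + 2 * pi * Im v) * cmod (theta3 v t)"
    by (simp only: theta3_plust norm_mult norm_minus_cancel norm_qfac)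
qed

lemma hh_plus1: "qp th \<Longrightarrow> hh th t (u + 1) = hh th t u"
  unfolding qp_def hh_def by simp

lemma hh_plust: assumes "qp th" "Im t \<noteq> 0" shows "hh th t (u + t) = hh th t u"
proof -
  have "hh th t (u + t) = exp (-2*pi*(Im u + Im t)^2 / Im t) * (exp (pi * Im t + 2*pi*Im u))^2 * (cmod (th u t))^2"
    using assms(1) unfolding qp_def hh_def by (simp add: power_mult_distrib)
  also have "exp (-2*pi*(Im u + Im t)^2 / Im t) * (exp (pi * Im t + 2*pi*Im u))^2 = exp (-2*pi*(Im u)^2 / Im t)"
  proof -
    have "exp (-2*pi*(Im u + Im t)^2 / Im t) * (exp (pi * Im t + 2*pi*Im u))^2
       = exp (-2*pi*(Im u + Im t)^2 / Im t + ((pi * Im t + 2*pi*Im u) + (pi * Im t + 2*pi*Im u)))"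
      by (simp only: exp_add power2_eq_square)
    also have "-2*pi*(Im u + Im t)^2 / Im t + ((pi * Im t + 2*pi*Im u) + (pi * Im t + 2*pi*Im u)) = -2*pi*(Im u)^2 / Im t"
      using assms(2) by (simp add: field_simps power2_eq_square)
    finally show ?thesis .
  qed
  finally show ?thesis unfolding hh_def by simp
qed

lemma per_nat: assumes "\<And>u. f (u + d) = (f u :: real)" shows "f (u + of_nat k * d) = f u"
proof (induction k arbitrary: u)
  case 0 then show ?case by simp
next
  case (Suc k)
  have "f (u + of_nat (Suc k) * d) = f ((u + of_nat k * d) + d)" by (simp add: algebra_simps)
  also have "\<dots> = f u" using assms Suc by simp
  finally show ?case .
qed

lemma per_int: assumes "\<And>u. f (u + d) = (f u :: real)" shows "f (u + of_int k * (d::complex)) = f u"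
proof (cases "k \<ge> 0")
  case True
  define n where "n = nat k"
  have "k = int n" using True unfolding n_def by simp
  then show ?thesis using per_nat[of f d, OF assms] by simp
next
  case False
  define n where "n = nat (- k)"
  have n: "k = - int n" using False unfolding n_def by simp
  have "f u = f ((u + of_int k * d) + of_nat n * d)" using n by simp
  also have "\<dots> = f (u + of_int k * d)" using per_nat[of f d, OF assms] by blast
  finally show ?thesis by simp
qed

lemma hh_diff:
  assumes "qp th" "Im t \<noteq> 0" "u' = u + of_int a + of_int b * t"
  shows "hh th t u' = hh th t u"
proof -
  have "hh th t ((u + of_int b * t) + of_int a * 1) = hh th t (u + of_int b * t)"
    by (rule per_int) (use hh_plus1[OF assms(1)] in simp)
  also have "\<dots> = hh th t u"
    by (rule per_int) (use hh_plust[OF assms(1,2)] in simp)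
  finally show ?thesis using assms(3) by (simp add: algebra_simps)
qed

lemma hh_lin:
  assumes "qp th" "Im t \<noteq> 0"
  shows "hh th t (u + of_int c * (of_int a + of_int b * t)) = hh th t u"
  by (rule hh_diff[OF assms, of _ _ "c*a" "c*b"]) (simp add: algebra_simps)

lemma qp_theta_s: "qp (theta_s N)"
  unfolding theta_s_def using qp_theta0 qp_theta3 by simp

definition ind :: "nat \<Rightarrow> nat \<Rightarrow> int" where "ind m x = (if x = m then 1 else 0)"

definition pairH :: "nat \<Rightarrow> (nat \<Rightarrow> complex) \<Rightarrow> complex \<Rightarrow> real" where
  "pairH N v t = (\<Prod>j\<in>{1..N}. \<Prod>k\<in>{j<..N}. hh theta1 t (v k - v j) * hh theta1 t (v k + v j))"

definition pairA :: "nat \<Rightarrow> (nat \<Rightarrow> complex) \<Rightarrow> complex \<Rightarrow> real" where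
  "pairA N v t = (\<Prod>j\<in>{1..N}. \<Prod>k\<in>{j<..N}. hh theta1 t (v k - v j))"

definition sing :: "rtype \<Rightarrow> complex \<Rightarrow> complex \<Rightarrow> real" where
  "sing R t x = (case R of TB \<Rightarrow> hh theta1 t x | TBv \<Rightarrow> hh theta1 (2*t) (2*x)
     | TC \<Rightarrow> hh theta1 t (2*x) | TCv \<Rightarrow> hh theta1 (t/2) x
     | TBC \<Rightarrow> hh theta1 t x * hh theta0 (2*t) (2*x) | _ \<Rightarrow> 1)"

definition HP :: "rtype \<Rightarrow> nat \<Rightarrow> complex \<Rightarrow> (nat \<Rightarrow> complex) \<Rightarrow> real" where
  "HP R N t v = (if R = TA then hh (theta_s N) t (\<Sum>k\<in>{1..N}. v k) * pairA N v t
      else (\<Prod>l\<in>{1..N}. sing R t (v l)) * pairH N v t)"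

lemma sing_inv:
  assumes "Im t \<noteq> 0" "d = of_int a + of_int b * t"
  shows "sing R t (x + of_int i * d) = sing R t x"
proof -
  have t2: "Im (2*t) \<noteq> 0" "Im (t/2) \<noteq> 0" using assms(1) by auto
  have A: "hh theta1 t (x + of_int i * d) = hh theta1 t x"
    using hh_lin[OF qp_theta1 assms(1)] assms(2) by simp
  have B: "hh theta1 (2*t) (2*(x + of_int i * d)) = hh theta1 (2*t) (2*x)"
    by (rule hh_diff[OF qp_theta1 t2(1), of _ _ "2*i*a" "i*b"]) (simp add: assms(2) algebra_simps)
  have B0: "hh theta0 (2*t) (2*(x + of_int i * d)) = hh theta0 (2*t) (2*x)"
    by (rule hh_diff[OF qp_theta0 t2(1), of _ _ "2*i*a" "i*b"]) (simp add: assms(2) algebra_simps)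
  have C: "hh theta1 t (2*(x + of_int i * d)) = hh theta1 t (2*x)"
    by (rule hh_diff[OF qp_theta1 assms(1), of _ _ "2*i*a" "2*i*b"]) (simp add: assms(2) algebra_simps)
  have D: "hh theta1 (t/2) (x + of_int i * d) = hh theta1 (t/2) x"
    by (rule hh_diff[OF qp_theta1 t2(2), of _ _ "i*a" "2*i*b"]) (simp add: assms(2) algebra_simps)
  show ?thesis unfolding sing_def using A B B0 C D by (cases R) simp_all
qed

lemma HP_inv:
  assumes "Im t \<noteq> 0" "d = of_int a + of_int b * t" "m \<in> {1..N}"
  shows "HP R N t (\<lambda>x. v x + of_int (ind m x) * d) = HP R N t v"
proof -
  let ?v = "\<lambda>x. v x + of_int (ind m x) * d"
  have m: "\<And>j k. hh theta1 t (?v k - ?v j) = hh theta1 t (v k - v j)"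
  proof -
    fix j k
    have "?v k - ?v j = (v k - v j) + of_int (ind m k - ind m j) * (of_int a + of_int b * t)"
      using assms(2) by (simp add: algebra_simps)
    then show "hh theta1 t (?v k - ?v j) = hh theta1 t (v k - v j)"
      by (simp only: hh_lin[OF qp_theta1 assms(1)])
  qed
  have p: "\<And>j k. hh theta1 t (?v k + ?v j) = hh theta1 t (v k + v j)"
  proof -
    fix j k
    have "?v k + ?v j = (v k + v j) + of_int (ind m k + ind m j) * (of_int a + of_int b * t)"
      using assms(2) by (simp add: algebra_simps)
    then show "hh theta1 t (?v k + ?v j) = hh theta1 t (v k + v j)"
      by (simp only: hh_lin[OF qp_theta1 assms(1)])
  qed
  have s: "(\<Sum>k\<in>{1..N}. ?v k) = (\<Sum>k\<in>{1..N}. v k) + of_int 1 * (of_int a + of_int b * t)"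
  proof -
    have "(\<Sum>k\<in>{1..N}. ?v k) = (\<Sum>k\<in>{1..N}. v k) + (\<Sum>k\<in>{1..N}. of_int (ind m k) * d)"
      by (simp add: sum.distrib)
    also have "(\<Sum>k\<in>{1..N}. of_int (ind m k) * d) = d"
    proof -
      have "\<And>k. of_int (ind m k) * d = (if k = m then d else 0)" by (simp add: ind_def)
      then show ?thesis using assms(3) by (simp add: sum.delta)
    qed
    finally show ?thesis using assms(2) by simp
  qed
  have hs: "hh (theta_s N) t (\<Sum>k\<in>{1..N}. ?v k) = hh (theta_s N) t (\<Sum>k\<in>{1..N}. v k)"
    unfolding s by (rule hh_lin[OF qp_theta_s assms(1)])
  have sg: "\<And>l. sing R t (?v l) = sing R t (v l)"
    by (rule sing_inv[OF assms(1,2)])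
  show ?thesis unfolding HP_def pairA_def pairH_def using m p hs sg by simp
qed

lemma dsum_Suc:
  "(\<Sum>j\<in>{1..Suc N}. \<Sum>k\<in>{j<..Suc N}. F j k) =
   (\<Sum>j\<in>{1..N}. \<Sum>k\<in>{j<..N}. F j k) + (\<Sum>j\<in>{1..N}. (F j (Suc N) :: real))"
proof -
  have "(\<Sum>j\<in>{1..Suc N}. \<Sum>k\<in>{j<..Suc N}. F j k) = (\<Sum>j\<in>{1..N}. \<Sum>k\<in>{j<..Suc N}. F j k)"
    by simp
  also have "\<dots> = (\<Sum>j\<in>{1..N}. (\<Sum>k\<in>{j<..N}. F j k) + F j (Suc N))"
  proof (rule sum.cong[OF refl])
    fix j assume "j \<in> {1..N}"
    then have "{j<..Suc N} = insert (Suc N) {j<..N}" by auto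
    then show "(\<Sum>k\<in>{j<..Suc N}. F j k) = (\<Sum>k\<in>{j<..N}. F j k) + F j (Suc N)" by simp
  qed
  also have "\<dots> = (\<Sum>j\<in>{1..N}. \<Sum>k\<in>{j<..N}. F j k) + (\<Sum>j\<in>{1..N}. F j (Suc N))"
    by (simp add: sum.distrib)
  finally show ?thesis .
qed

lemma quad1:
  "(\<Sum>j\<in>{1..N}. \<Sum>k\<in>{j<..N}. (y k - y j)^2 + (y k + y j)^2) = 2 * (real N - 1) * (\<Sum>j\<in>{1..N}. (y j :: real)^2)"
proof (induction N)
  case 0 then show ?case by simp
next
  case (Suc N)
  have pt: "\<And>j. (y (Suc N) - y j)^2 + (y (Suc N) + y j)^2 = 2 * (y j)^2 + 2 * (y (Suc N))^2"
    by (simp add: power2_eq_square algebra_simps)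
  have "(\<Sum>j\<in>{1..Suc N}. \<Sum>k\<in>{j<..Suc N}. (y k - y j)^2 + (y k + y j)^2)
     = 2 * (real N - 1) * (\<Sum>j\<in>{1..N}. (y j)^2) + (\<Sum>j\<in>{1..N}. 2 * (y j)^2 + 2 * (y (Suc N))^2)"
    unfolding dsum_Suc Suc.IH pt ..
  also have "\<dots> = 2 * (real N - 1) * (\<Sum>j\<in>{1..N}. (y j)^2) + 2 * (\<Sum>j\<in>{1..N}. (y j)^2) + 2 * real N * (y (Suc N))^2"
    by (simp add: sum.distrib sum_distrib_left)
  also have "\<dots> = 2 * (real (Suc N) - 1) * (\<Sum>j\<in>{1..Suc N}. (y j)^2)"
    by (simp add: algebra_simps)
  finally show ?case .
qed

lemma quadA:
  "(\<Sum>j\<in>{1..N}. \<Sum>k\<in>{j<..N}. (y k - y j)^2) + (\<Sum>j\<in>{1..N}. y j)^2 = real N * (\<Sum>j\<in>{1..N}. (y j :: real)^2)"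
proof (induction N)
  case 0 then show ?case by simp
next
  case (Suc N)
  let ?S1 = "\<Sum>j\<in>{1..N}. y j" and ?S2 = "\<Sum>j\<in>{1..N}. (y j)^2" and ?z = "y (Suc N)"
  have pt: "\<And>j. (?z - y j)^2 = ?z^2 - 2 * ?z * y j + (y j)^2"
    by (simp add: power2_eq_square algebra_simps)
  have e1: "(\<Sum>j\<in>{1..N}. (?z - y j)^2) = real N * ?z^2 - 2 * ?z * ?S1 + ?S2"
    unfolding pt by (simp add: sum.distrib sum_subtractf sum_distrib_left)
  have "(\<Sum>j\<in>{1..Suc N}. \<Sum>k\<in>{j<..Suc N}. (y k - y j)^2) + (\<Sum>j\<in>{1..Suc N}. y j)^2
     = (\<Sum>j\<in>{1..N}. \<Sum>k\<in>{j<..N}. (y k - y j)^2) + (\<Sum>j\<in>{1..N}. (?z - y j)^2) + (?S1 + ?z)^2"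
    unfolding dsum_Suc by simp
  also have "\<dots> = ((\<Sum>j\<in>{1..N}. \<Sum>k\<in>{j<..N}. (y k - y j)^2) + ?S1^2) + real N * ?z^2 + ?S2 + ?z^2"
    unfolding e1 by (simp add: power2_eq_square algebra_simps)
  also have "\<dots> = real (Suc N) * (\<Sum>j\<in>{1..Suc N}. (y j)^2)"
    unfolding Suc.IH by (simp add: algebra_simps)
  finally show ?case .
qed

lemma cmod_prod2: "(cmod (prod f A))^2 = (\<Prod>x\<in>A. (cmod (f x))^2)"
  by (simp add: prod_norm[symmetric] prod_power_distrib)

lemma prod_exp_mult: "(\<Prod>x\<in>A. exp (f x) * g x) = exp (\<Sum>x\<in>A. f x) * (\<Prod>x\<in>A. (g x::real))"
proof (cases "finite A")
  case True then show ?thesis by (simp add: prod.distrib exp_sum)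
qed simp

lemma hh_exp: "hh th t u = exp (-2*pi/Im t * (Im u)^2) * (cmod (th u t))^2"
  unfolding hh_def by simp

definition cR :: "rtype \<Rightarrow> real" where
  "cR R = (case R of TA \<Rightarrow> 0 | TB \<Rightarrow> 1 | TBv \<Rightarrow> 2 | TC \<Rightarrow> 4 | TCv \<Rightarrow> 2 | TBC \<Rightarrow> 3 | TD \<Rightarrow> 0)"

definition sfac :: "rtype \<Rightarrow> complex \<Rightarrow> complex \<Rightarrow> complex" where
  "sfac R t x = (case R of TB \<Rightarrow> theta1 x t | TBv \<Rightarrow> theta1 (2*x) (2*t)
     | TC \<Rightarrow> theta1 (2*x) t | TCv \<Rightarrow> theta1 x (t/2)
     | TBC \<Rightarrow> theta1 x t * theta0 (2*x) (2*t) | _ \<Rightarrow> 1)"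

lemma sing_exp:
  assumes "Im t \<noteq> 0"
  shows "sing R t x = exp (-2*pi/Im t * (cR R * (Im x)^2)) * (cmod (sfac R t x))^2"
proof (cases R)
  case TBv
  have "-2*pi*(Im (2*x))^2 / Im (2*t) = -2*pi/Im t * (2 * (Im x)^2)"
    using assms by (simp add: field_simps power2_eq_square)
  then show ?thesis using TBv unfolding sing_def sfac_def cR_def hh_def by simp
next
  case TC
  have "-2*pi*(Im (2*x))^2 / Im t = -2*pi/Im t * (4 * (Im x)^2)"
    using assms by (simp add: field_simps power2_eq_square)
  then show ?thesis using TC unfolding sing_def sfac_def cR_def hh_def by simp
next
  case TCv
  have "-2*pi*(Im x)^2 / Im (t/2) = -2*pi/Im t * (2 * (Im x)^2)"
    using assms by (simp add: field_simps power2_eq_square)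
  then show ?thesis using TCv unfolding sing_def sfac_def cR_def hh_def by simp
next
  case TBC
  have e: "-2*pi*(Im x)^2 / Im t + -2*pi*(Im (2*x))^2 / Im (2*t) = -2*pi/Im t * (3 * (Im x)^2)"
    using assms by (simp add: field_simps power2_eq_square)
  have "sing R t x = (exp (-2*pi*(Im x)^2 / Im t) * exp (-2*pi*(Im (2*x))^2 / Im (2*t)))
      * ((cmod (theta1 x t))^2 * (cmod (theta0 (2*x) (2*t)))^2)"
    using TBC unfolding sing_def hh_def by (simp only: rtype.case mult_ac)
  also have "\<dots> = exp (-2*pi/Im t * (3 * (Im x)^2)) * (cmod (theta1 x t * theta0 (2*x) (2*t)))^2"
    unfolding exp_add[symmetric] e by (simp add: norm_mult power_mult_distrib)
  finally show ?thesis using TBC unfolding sfac_def cR_def by simp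
qed (auto simp: sing_def sfac_def cR_def hh_def)

lemma macW_split: "R \<noteq> TA \<Longrightarrow> macW R N v t = (\<Prod>l\<in>{1..N}. sfac R t (v l)) * Pfac N v t"
  by (cases R) (simp_all add: macW_def sfac_def)

lemma prod_sing:
  assumes "Im t \<noteq> 0"
  shows "(\<Prod>l\<in>{1..N}. sing R t (v l)) = exp (-2*pi/Im t * (cR R * (\<Sum>l\<in>{1..N}. (Im (v l))^2)))
     * (cmod (\<Prod>l\<in>{1..N}. sfac R t (v l)))^2"
  by (simp add: sing_exp[OF assms] prod_exp_mult cmod_prod2 sum_distrib_left)

lemma pairH_exp:
  "pairH N v t = exp (-2*pi/Im t * (\<Sum>j\<in>{1..N}. \<Sum>k\<in>{j<..N}. (Im (v k) - Im (v j))^2 + (Im (v k) + Im (v j))^2))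
     * (cmod (Pfac N v t))^2"
proof -
  have pt: "\<And>j k. hh theta1 t (v k - v j) * hh theta1 t (v k + v j) =
     exp (-2*pi/Im t * ((Im (v k) - Im (v j))^2 + (Im (v k) + Im (v j))^2)) *
     (cmod (theta1 (v k - v j) t * theta1 (v k + v j) t))^2"
  proof -
    fix j k
    have ee: "exp (-2*pi/Im t * ((Im (v k) - Im (v j))^2 + (Im (v k) + Im (v j))^2))
      = exp (-2*pi/Im t * (Im (v k) - Im (v j))^2) * exp (-2*pi/Im t * (Im (v k) + Im (v j))^2)"
      by (simp only: distrib_left exp_add)
    show "hh theta1 t (v k - v j) * hh theta1 t (v k + v j) =
     exp (-2*pi/Im t * ((Im (v k) - Im (v j))^2 + (Im (v k) + Im (v j))^2)) *
     (cmod (theta1 (v k - v j) t * theta1 (v k + v j) t))^2"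
      unfolding hh_exp ee norm_mult power_mult_distrib by simp
  qed
  show ?thesis unfolding pairH_def Pfac_def pt prod_exp_mult cmod_prod2 sum_distrib_left ..
qed

lemma pairA_exp:
  "pairA N v t = exp (-2*pi/Im t * (\<Sum>j\<in>{1..N}. \<Sum>k\<in>{j<..N}. (Im (v k) - Im (v j))^2))
     * (cmod (macW TA N v t))^2"
proof -
  have pt: "\<And>j k. hh theta1 t (v k - v j) =
     exp (-2*pi/Im t * ((Im (v k) - Im (v j))^2)) * (cmod (theta1 (v k - v j) t))^2"
    unfolding hh_exp by simp
  show ?thesis unfolding pairA_def macW_def rtype.case pt prod_exp_mult cmod_prod2 sum_distrib_left ..
qed

lemma calN_eq: "R \<noteq> TA \<Longrightarrow> 1 \<le> N \<Longrightarrow> cR R + 2 * (real N - 1) = real (calN R N)"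
  by (cases R) (auto simp: cR_def calN_def of_nat_diff)

lemma exp_comb: "exp (c*A) * X * (exp (c*B) * Y) = exp (c*(B+A)) * X * (Y::real)"
  by (simp add: distrib_left exp_add mult_ac)

lemma exp_comb2: "exp (c*(a*S)) * X * (exp (c*(b*S)) * Y) = exp (c*((a+b)*S)) * (X * (Y::real))"
  by (simp add: distrib_left distrib_right exp_add mult_ac)

lemma Qfun_HP:
  assumes L: "0 < L" and W: "0 < W" and N: "1 \<le> N"
  shows "Qfun R N L W z = HP R N (\<i> * of_real W / of_real L) (\<lambda>j. z j / of_real L)"
proof -
  define t where "t = \<i> * of_real W / of_real L"
  define v where "v = (\<lambda>j. z j / of_real L)"
  have Imt: "Im t = W / L" unfolding t_def by simp
  have Imt0: "Im t \<noteq> 0" using L W Imt by simp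
  have Imv: "\<And>j. Im (v j) = Im (z j) / L" unfolding v_def by simp
  have key: "\<And>c. -2*pi/Im t * (c * (\<Sum>j\<in>{1..N}. (Im (v j))^2)) = -2*pi*c/(L*W) * (\<Sum>j\<in>{1..N}. (Im (z j))^2)"
  proof -
    fix c :: real
    have "(\<Sum>j\<in>{1..N}. (Im (v j))^2) = (\<Sum>j\<in>{1..N}. (Im (z j))^2) / L^2"
      unfolding Imv by (simp add: power_divide sum_divide_distrib)
    then show "-2*pi/Im t * (c * (\<Sum>j\<in>{1..N}. (Im (v j))^2)) = -2*pi*c/(L*W) * (\<Sum>j\<in>{1..N}. (Im (z j))^2)"
      unfolding Imt using L W by (simp add: field_simps power2_eq_square)
  qed
  show ?thesis
  proof (cases "R = TA")
    case True
    have sv: "(\<Sum>k\<in>{1..N}. z k / of_real L) = (\<Sum>k\<in>{1..N}. v k)" unfolding v_def ..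
    have "HP R N t v = exp (-2*pi/Im t * (Im (\<Sum>k\<in>{1..N}. v k))^2) * (cmod (theta_s N (\<Sum>k\<in>{1..N}. v k) t))^2
        * (exp (-2*pi/Im t * (\<Sum>j\<in>{1..N}. \<Sum>k\<in>{j<..N}. (Im (v k) - Im (v j))^2)) * (cmod (macW TA N v t))^2)"
      unfolding HP_def using True by (simp only: True simp_thms if_True hh_exp pairA_exp)
    also have "\<dots> = exp (-2*pi/Im t * ((\<Sum>j\<in>{1..N}. \<Sum>k\<in>{j<..N}. (Im (v k) - Im (v j))^2) + (\<Sum>k\<in>{1..N}. Im (v k))^2))
        * (cmod (theta_s N (\<Sum>k\<in>{1..N}. v k) t))^2 * (cmod (macW TA N v t))^2"
      unfolding Im_sum by (rule exp_comb)
    also have "(\<Sum>j\<in>{1..N}. \<Sum>k\<in>{j<..N}. (Im (v k) - Im (v j))^2) + (\<Sum>k\<in>{1..N}. Im (v k))^2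
        = real N * (\<Sum>j\<in>{1..N}. (Im (v j))^2)"
      by (rule quadA)
    also have "-2*pi/Im t * (real N * (\<Sum>j\<in>{1..N}. (Im (v j))^2)) = -2*pi*real (calN R N)/(L*W) * (\<Sum>j\<in>{1..N}. (Im (z j))^2)"
      unfolding key using True by (simp add: calN_def)
    finally show ?thesis unfolding Qfun_def Let_def t_def[symmetric] v_def[symmetric] sv using True
      by (simp add: mult_ac)
  next
    case False
    have "HP R N t v = exp (-2*pi/Im t * (cR R * (\<Sum>l\<in>{1..N}. (Im (v l))^2)))
     * (cmod (\<Prod>l\<in>{1..N}. sfac R t (v l)))^2 * (exp (-2*pi/Im t * (2 * (real N - 1) * (\<Sum>j\<in>{1..N}. (Im (v j))^2)))
     * (cmod (Pfac N v t))^2)"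
      unfolding HP_def by (simp only: False if_False prod_sing[OF Imt0] pairH_exp quad1 simp_thms)
    also have "\<dots> = exp (-2*pi/Im t * ((cR R + 2 * (real N - 1)) * (\<Sum>l\<in>{1..N}. (Im (v l))^2)))
       * (cmod (macW R N v t))^2"
      unfolding macW_split[OF False] norm_mult power_mult_distrib by (rule exp_comb2)
    also have "-2*pi/Im t * ((cR R + 2 * (real N - 1)) * (\<Sum>l\<in>{1..N}. (Im (v l))^2))
       = -2*pi*real (calN R N)/(L*W) * (\<Sum>j\<in>{1..N}. (Im (z j))^2)"
      unfolding key calN_eq[OF False N] ..
    finally show ?thesis unfolding Qfun_def Let_def t_def[symmetric] v_def[symmetric] using False
      by (simp add: mult_ac)
  qed
qed


theorem proposition2p2:
  fixes L W :: real and N :: nat and R :: rtype and m :: nat and z :: "nat \<Rightarrow> complex"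
  assumes "0 < L" and "0 < W" and "1 \<le> N" and "m \<in> {1..N}"
  shows "Qfun R N L W (sigma m (of_real L) z) = Qfun R N L W z
       \<and> Qfun R N L W (sigma m (\<i> * of_real W) z) = Qfun R N L W z"
proof -
  define t where "t = \<i> * of_real W / of_real L"
  define v where "v = (\<lambda>j. z j / of_real L)"
  have Imt0: "Im t \<noteq> 0" unfolding t_def using assms(1,2) by simp
  have L0: "complex_of_real L \<noteq> 0" using assms(1) by simp
  have e1: "(\<lambda>j. sigma m (of_real L) z j / of_real L) = (\<lambda>x. v x + of_int (ind m x) * 1)"
    unfolding v_def sigma_def ind_def using L0 by (auto simp: fun_eq_iff add_divide_distrib)
  have e2: "(\<lambda>j. sigma m (\<i> * of_real W) z j / of_real L) = (\<lambda>x. v x + of_int (ind m x) * t)"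
    unfolding v_def sigma_def ind_def t_def using L0 by (auto simp: fun_eq_iff add_divide_distrib)
  have "Qfun R N L W (sigma m (of_real L) z) = HP R N t (\<lambda>x. v x + of_int (ind m x) * 1)"
    unfolding Qfun_HP[OF assms(1-3)] t_def[symmetric] e1 ..
  also have "\<dots> = HP R N t v"
    by (rule HP_inv[OF Imt0 _ assms(4), of 1 1 0]) simp
  also have "\<dots> = Qfun R N L W z"
    unfolding Qfun_HP[OF assms(1-3)] t_def v_def ..
  finally have A: "Qfun R N L W (sigma m (of_real L) z) = Qfun R N L W z" .
  have "Qfun R N L W (sigma m (\<i> * of_real W) z) = HP R N t (\<lambda>x. v x + of_int (ind m x) * t)"
    unfolding Qfun_HP[OF assms(1-3)] t_def[symmetric] e2 ..
  also have "\<dots> = HP R N t v"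
    by (rule HP_inv[OF Imt0 _ assms(4), of t 0 1]) simp
  also have "\<dots> = Qfun R N L W z"
    unfolding Qfun_HP[OF assms(1-3)] t_def v_def ..
  finally show ?thesis using A by simp
qed

end
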